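(* For all $n\ge2$, $\mathfrak a_2^\pi(n)=\{g\in\mathfrak{so}(2^n): gZ^{\otimes n}=Z^{\otimes n}g\}$.
   Context: Pauli matrices $I,X,Y,Z$; $A_iB_j$ ($i\ne j$) denotes the length-$n$ Pauli string with $A$ at position $i$, $B$ at position $j$, $I$ elsewhere. $\mathfrak{so}(N)$ is the Lie algebra of real skew-symmetric $N\times N$ matrices. For a set $S$ of Pauli strings, $\mathrm{Lie}\langle S\rangle$ is the smallest real Lie subalgebra of $\mathfrak u(2^n)$ containing $\{iP:P\in S\}$. $\mathfrak a_2^\pi(n)=\mathrm{Lie}\langle X_iY_j,\,Y_iX_j:1\le i\ne j\le n\rangle$. *)

theory Defs
  imports Complex_Main "Jordan_Normal_Form.Matrix"
begin

datatype pauli = PI | PX | PY | PZ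

fun pauli_entry :: "pauli \<Rightarrow> nat \<Rightarrow> nat \<Rightarrow> complex" where
  "pauli_entry PI a b = (if a = b then 1 else 0)"
| "pauli_entry PX a b = (if a = b then 0 else 1)"
| "pauli_entry PY a b = (if a = b then 0 else if a = 0 then - \<i> else \<i>)"
| "pauli_entry PZ a b = (if a = b then (if a = 0 then 1 else -1) else 0)"

text \<open>Pauli string P_1 \<otimes> ... \<otimes> P_n as a 2^n x 2^n matrix; qubit k (1..n)
  corresponds to bit (k-1) of the row/column index.\<close>
definition pauli_string :: "nat \<Rightarrow> (nat \<Rightarrow> pauli) \<Rightarrow> complex mat" where
  "pauli_string n P = mat (2^n) (2^n)
     (\<lambda>(r, c). \<Prod>k\<in>{1..n}. pauli_entry (P k) ((r div 2^(k-1)) mod 2) ((c div 2^(k-1)) mod 2))"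

definition two_site :: "nat \<Rightarrow> pauli \<Rightarrow> nat \<Rightarrow> pauli \<Rightarrow> nat \<Rightarrow> complex mat" where
  "two_site n A i B j = pauli_string n (\<lambda>k. if k = i then A else if k = j then B else PI)"

definition Z_all :: "nat \<Rightarrow> complex mat" where
  "Z_all n = pauli_string n (\<lambda>k. PZ)"

inductive_set lie_closure :: "nat \<Rightarrow> complex mat set \<Rightarrow> complex mat set"
  for N :: nat and G :: "complex mat set" where
  gen: "A \<in> G \<Longrightarrow> A \<in> lie_closure N G"
| zero: "0\<^sub>m N N \<in> lie_closure N G"
| add: "A \<in> lie_closure N G \<Longrightarrow> B \<in> lie_closure N G \<Longrightarrow> A + B \<in> lie_closure N G"
| smult: "A \<in> lie_closure N G \<Longrightarrow> complex_of_real r \<cdot>\<^sub>m A \<in> lie_closure N G"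
| bracket: "A \<in> lie_closure N G \<Longrightarrow> B \<in> lie_closure N G \<Longrightarrow> A * B - B * A \<in> lie_closure N G"

definition Lie_gen :: "nat \<Rightarrow> complex mat set \<Rightarrow> complex mat set" where
  "Lie_gen n S = lie_closure (2^n) ((\<lambda>P. \<i> \<cdot>\<^sub>m P) ` S)"

definition a2pi :: "nat \<Rightarrow> complex mat set" where
  "a2pi n = Lie_gen n
     ({two_site n PX i PY j | i j. i \<in> {1..n} \<and> j \<in> {1..n} \<and> i \<noteq> j}
    \<union> {two_site n PY i PX j | i j. i \<in> {1..n} \<and> j \<in> {1..n} \<and> i \<noteq> j})"

definition so_mat :: "nat \<Rightarrow> complex mat set" where
  "so_mat N = {A \<in> carrier_mat N N. (\<forall>i<N. \<forall>j<N. A $$ (i, j) \<in> \<real>) \<and> transpose_mat A = - A}"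

end

theory Submission
  imports Defs
begin

lemma lt_pow_bits: "(m::nat) < 2^n \<longleftrightarrow> (\<forall>k\<ge>n. \<not> bit m k)"
proof
  assume "m < 2^n"
  then have "take_bit n m = m" by (simp add: take_bit_nat_eq_self_iff)
  then show "\<forall>k\<ge>n. \<not> bit m k" by (metis bit_take_bit_iff not_le)
next
  assume h: "\<forall>k\<ge>n. \<not> bit m k"
  have "take_bit n m = m"
    using h by (intro bit_eqI) (metis bit_take_bit_iff not_less)
  then show "m < 2^n" by (simp add: take_bit_nat_eq_self_iff)
qed

definition msk :: "nat set \<Rightarrow> nat" where "msk M = (\<Sum>k\<in>M. 2^k)"

lemma bit_msk: "finite M \<Longrightarrow> bit (msk M) k \<longleftrightarrow> k \<in> M"
proof (induction M arbitrary: k rule: finite_induct)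
  case empty then show ?case by (simp add: msk_def)
next
  case (insert a M)
  have "msk (insert a M) = 2^a + msk M" using insert by (simp add: msk_def)
  also have "\<dots> = or (2^a) (msk M)"
    by (rule disjunctive_add) (use insert insert.IH in \<open>auto simp: bit_exp_iff\<close>)
  finally show ?case using insert insert.IH by (auto simp: bit_or_iff bit_exp_iff)
qed

definition flip :: "nat set \<Rightarrow> nat \<Rightarrow> nat" where "flip M r = xor r (msk M)"

lemma bit_flip: "finite M \<Longrightarrow> bit (flip M r) k \<longleftrightarrow> (bit r k \<noteq> (k \<in> M))"
  by (simp add: flip_def bit_xor_iff bit_msk)

lemma flip_lt: "M \<subseteq> {..<n} \<Longrightarrow> r < 2^n \<Longrightarrow> flip M r < 2^n"
  using finite_subset[of M "{..<n}"]
  by (auto simp: lt_pow_bits bit_flip)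

definition sd :: "nat set \<Rightarrow> nat set \<Rightarrow> nat set" where "sd A B = (A - B) \<union> (B - A)"

lemma flip_flip: "finite M \<Longrightarrow> finite M' \<Longrightarrow> flip M (flip M' c) = flip (sd M M') c"
  by (rule bit_eqI) (auto simp: bit_flip sd_def)

lemma flip_inv[simp]: "finite M \<Longrightarrow> flip M (flip M c) = c"
  by (rule bit_eqI) (auto simp: bit_flip)

lemma flip_sym: "finite M \<Longrightarrow> r = flip M c \<longleftrightarrow> c = flip M r"
  by auto

lemma flip_eq_iff: "M \<subseteq> {..<n} \<Longrightarrow> r < 2^n \<Longrightarrow> c < 2^n \<Longrightarrow>
   r = flip M c \<longleftrightarrow> (\<forall>k<n. (bit r k \<noteq> bit c k) \<longleftrightarrow> k \<in> M)"
proof -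
  assume a: "M \<subseteq> {..<n}" "r < 2^n" "c < 2^n"
  have f: "finite M" using a finite_subset by blast
  have "r = flip M c \<longleftrightarrow> (\<forall>k. bit r k \<longleftrightarrow> bit (flip M c) k)" by (simp add: bit_eq_iff)
  also have "\<dots> \<longleftrightarrow> (\<forall>k<n. (bit r k \<noteq> bit c k) \<longleftrightarrow> k \<in> M)"
    using a f by (auto simp: bit_flip lt_pow_bits) (metis lessThan_iff not_le subsetD)+
  finally show ?thesis .
qed

definition zz :: "nat set \<Rightarrow> nat \<Rightarrow> complex" where
  "zz S r = (\<Prod>k\<in>S. if bit r k then -1 else 1)"
definition eps :: "nat set \<Rightarrow> complex" where "eps A = (-1)^card A"

lemma eps_if: "eps A = (if even (card A) then 1 else -1)"
  by (simp add: eps_def minus_one_power_iff)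

lemma zz_flip: "finite S \<Longrightarrow> finite M \<Longrightarrow> zz S (flip M r) = eps (S \<inter> M) * zz S r"
proof -
  assume f: "finite S" "finite M"
  have "zz S (flip M r) = (\<Prod>k\<in>S. (if k\<in>M then -1 else 1) * (if bit r k then -1 else (1::complex)))"
    unfolding zz_def using f by (intro prod.cong) (auto simp: bit_flip)
  also have "\<dots> = (\<Prod>k\<in>S. if k\<in>M then -1 else (1::complex)) * zz S r"
    by (simp add: prod.distrib zz_def)
  also have "(\<Prod>k\<in>S. if k\<in>M then -1 else (1::complex)) = eps (S\<inter>M)"
    using f by (simp add: prod.If_cases eps_def Int_def)
  finally show ?thesis .
qed

lemma zz_sd: "finite S \<Longrightarrow> finite T \<Longrightarrow> zz S r * zz T r = zz (sd S T) r"
proof -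
  assume f: "finite S" "finite T"
  define g where "g k = (if bit r k then -1 else (1::complex))" for k
  have gg: "g k * g k = 1" for k by (simp add: g_def)
  have 1: "zz S r = prod g (S \<inter> T) * prod g (S - T)" unfolding zz_def g_def
    using f by (simp add: prod.Int_Diff[symmetric])
  have 2: "zz T r = prod g (S \<inter> T) * prod g (T - S)" unfolding zz_def g_def
    using f by (metis Int_commute prod.Int_Diff)
  have 3: "zz (sd S T) r = prod g (S - T) * prod g (T - S)" unfolding zz_def g_def sd_def
    using f by (subst prod.union_disjoint) auto
  have 4: "prod g (S \<inter> T) * prod g (S \<inter> T) = 1"
    by (simp add: prod.distrib[symmetric] gg)
  show ?thesis unfolding 1 2 3 using 4 by (simp add: algebra_simps)
qed

lemma zz_real: "zz S r \<in> \<real>"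
  unfolding zz_def by (intro prod_in_Reals) auto

lemma zz_nz: "zz S r \<noteq> 0"
  unfolding zz_def by (cases "finite S") (auto simp: prod_zero_iff)

definition Bm :: "nat \<Rightarrow> (nat \<Rightarrow> complex) \<Rightarrow> nat set \<Rightarrow> complex mat" where
  "Bm N \<phi> M = mat N N (\<lambda>(r,c). if r = flip M c then \<phi> r else 0)"

lemma Bm_carrier[simp]: "Bm N \<phi> M \<in> carrier_mat N N"
  and Bm_dim[simp]: "dim_row (Bm N \<phi> M) = N" "dim_col (Bm N \<phi> M) = N"
  by (auto simp: Bm_def)

lemma Bm_index: "r < N \<Longrightarrow> c < N \<Longrightarrow> Bm N \<phi> M $$ (r,c) = (if r = flip M c then \<phi> r else 0)"
  by (simp add: Bm_def)

lemma Bm_cong: "(\<And>r. r < N \<Longrightarrow> \<phi> r = \<psi> r) \<Longrightarrow> Bm N \<phi> M = Bm N \<psi> M"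
  by (rule eq_matI) (auto simp: Bm_index)

lemma Bm_add: "Bm N \<phi> M + Bm N \<psi> M = Bm N (\<lambda>r. \<phi> r + \<psi> r) M"
  by (rule eq_matI) (auto simp: Bm_index)

lemma Bm_minus: "Bm N \<phi> M - Bm N \<psi> M = Bm N (\<lambda>r. \<phi> r - \<psi> r) M"
  by (rule eq_matI) (auto simp: Bm_index)

lemma Bm_smult: "a \<cdot>\<^sub>m Bm N \<phi> M = Bm N (\<lambda>r. a * \<phi> r) M"
  by (rule eq_matI) (auto simp: Bm_index)

lemma Bm_zero: "Bm N (\<lambda>r. 0) M = 0\<^sub>m N N"
  by (rule eq_matI) (auto simp: Bm_index)

lemma Bm_mult:
  assumes M: "M \<subseteq> {..<n}" "M' \<subseteq> {..<n}"
  shows "Bm (2^n) \<phi> M * Bm (2^n) \<psi> M' = Bm (2^n) (\<lambda>r. \<phi> r * \<psi> (flip M r)) (sd M M')"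
proof (rule eq_matI)
  have f: "finite M" "finite M'" using M finite_subset by blast+
  fix r c assume rc: "r < dim_row (Bm (2^n) (\<lambda>r. \<phi> r * \<psi> (flip M r)) (sd M M'))"
    "c < dim_col (Bm (2^n) (\<lambda>r. \<phi> r * \<psi> (flip M r)) (sd M M'))"
  then have r: "r < 2^n" and c: "c < 2^n" by auto
  have "(Bm (2^n) \<phi> M * Bm (2^n) \<psi> M') $$ (r,c) =
     (\<Sum>t\<in>{0..<2^n}. Bm (2^n) \<phi> M $$ (r,t) * Bm (2^n) \<psi> M' $$ (t,c))"
    using r c by (simp add: index_mult_mat scalar_prod_def)
  also have "\<dots> = (\<Sum>t\<in>{0..<2^n}. if t = flip M' c then (if r = flip M t then \<phi> r else 0) * \<psi> t else 0)"
    using r c by (intro sum.cong) (auto simp: Bm_index)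
  also have "\<dots> = (if r = flip M (flip M' c) then \<phi> r else 0) * \<psi> (flip M' c)"
    using flip_lt[OF M(2) c] by simp
  also have "\<dots> = Bm (2^n) (\<lambda>r. \<phi> r * \<psi> (flip M r)) (sd M M') $$ (r,c)"
  proof (cases "r = flip M (flip M' c)")
    case True
    then have "flip M r = flip M' c" using f by simp
    then show ?thesis using True r c f by (simp add: Bm_index flip_flip)
  qed (use r c f in \<open>simp add: Bm_index flip_flip\<close>)
  finally show "(Bm (2^n) \<phi> M * Bm (2^n) \<psi> M') $$ (r,c) = Bm (2^n) (\<lambda>r. \<phi> r * \<psi> (flip M r)) (sd M M') $$ (r,c)" .
qed auto

lemma sd_commute: "sd A B = sd B A" by (auto simp: sd_def)

lemma comm_step:
  assumes S: "S \<subseteq> {..<n}" "T \<subseteq> {..<n}" and M: "M \<subseteq> {..<n}" "M' \<subseteq> {..<n}"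
    and A: "Bm (2^n) (zz S) M \<in> lie_closure (2^n) G"
    and B: "Bm (2^n) (zz T) M' \<in> lie_closure (2^n) G"
    and e: "eps (T \<inter> M) \<noteq> eps (S \<inter> M')"
  shows "Bm (2^n) (zz (sd S T)) (sd M M') \<in> lie_closure (2^n) G"
proof -
  have fS: "finite S" "finite T" "finite M" "finite M'" using S M finite_subset by blast+
  define e1 where "e1 = eps (T \<inter> M)"
  have e2: "eps (S \<inter> M') = - e1" using e unfolding e1_def eps_if by (auto split: if_splits)
  have e1sq: "e1 * e1 = 1" unfolding e1_def eps_if by auto
  have AB: "Bm (2^n) (zz S) M * Bm (2^n) (zz T) M' = Bm (2^n) (\<lambda>r. e1 * zz (sd S T) r) (sd M M')"
    unfolding Bm_mult[OF M] using fS by (intro Bm_cong) (simp add: zz_flip e1_def zz_sd[symmetric] algebra_simps)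
  have BA: "Bm (2^n) (zz T) M' * Bm (2^n) (zz S) M = Bm (2^n) (\<lambda>r. - e1 * zz (sd S T) r) (sd M M')"
    unfolding Bm_mult[OF M(2) M(1)] using fS e2 by (subst sd_commute, intro Bm_cong)
      (simp add: zz_flip zz_sd[symmetric] algebra_simps)
  have X: "Bm (2^n) (\<lambda>r. 2 * e1 * zz (sd S T) r) (sd M M') \<in> lie_closure (2^n) G"
  proof -
    have "Bm (2^n) (zz S) M * Bm (2^n) (zz T) M' - Bm (2^n) (zz T) M' * Bm (2^n) (zz S) M \<in> lie_closure (2^n) G"
      using A B by (rule lie_closure.bracket)
    also have "Bm (2^n) (zz S) M * Bm (2^n) (zz T) M' - Bm (2^n) (zz T) M' * Bm (2^n) (zz S) M
       = Bm (2^n) (\<lambda>r. 2 * e1 * zz (sd S T) r) (sd M M')"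
      unfolding AB BA Bm_minus by (intro Bm_cong) (simp add: algebra_simps)
    finally show ?thesis .
  qed
  have er: "e1 \<in> \<real>" unfolding e1_def eps_if by auto
  then obtain x where x: "e1 = complex_of_real x" by (auto elim: Reals_cases)
  have "complex_of_real (x/2) \<cdot>\<^sub>m Bm (2^n) (\<lambda>r. 2 * e1 * zz (sd S T) r) (sd M M') \<in> lie_closure (2^n) G"
    using X by (rule lie_closure.smult)
  also have "complex_of_real (x/2) \<cdot>\<^sub>m Bm (2^n) (\<lambda>r. 2 * e1 * zz (sd S T) r) (sd M M') = Bm (2^n) (zz (sd S T)) (sd M M')"
    unfolding Bm_smult by (intro Bm_cong) (use e1sq x in \<open>simp add: algebra_simps\<close>)
  finally show ?thesis .
qed

lemma odd_sd1: "finite X \<Longrightarrow> odd (card (sd X {b})) \<longleftrightarrow> even (card X)"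
proof -
  assume f: "finite X"
  show ?thesis
  proof (cases "b \<in> X")
    case True
    then have "sd X {b} = X - {b}" by (auto simp: sd_def)
    moreover have "card X \<ge> 1" using True f card_0_eq by fastforce
    ultimately show ?thesis using True f by auto
  next
    case False
    then have "sd X {b} = insert b X" by (auto simp: sd_def)
    then show ?thesis using False f by simp
  qed
qed

lemma bits_neq: "(t::nat) < 2^n \<Longrightarrow> r < 2^n \<Longrightarrow> t \<noteq> r \<Longrightarrow> \<exists>k<n. bit t k \<noteq> bit r k"
proof -
  assume a: "t < 2^n" "r < 2^n" "t \<noteq> r"
  then obtain k where k: "bit t k \<noteq> bit r k" using bit_eq_iff by blast
  have "k < n"
  proof (rule ccontr)
    assume "\<not> k < n"
    moreover have "\<forall>j\<ge>n. \<not> bit t j" "\<forall>j\<ge>n. \<not> bit r j"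
      using a(1,2) by (simp_all only: lt_pow_bits)
    ultimately show False using k by (simp add: not_less)
  qed
  then show ?thesis using k by blast
qed

lemma char_sum:
  assumes t: "t < 2^n" and r: "r < 2^n"
  shows "(\<Sum>S\<in>Pow {..<n}. zz S t * zz S r) = (if t = r then 2^n else 0)"
proof -
  define w where "w k = (if bit t k then -1 else (1::complex)) * (if bit r k then -1 else 1)" for k
  have "(\<Sum>S\<in>Pow {..<n}. zz S t * zz S r) = (\<Sum>S\<in>Pow {..<n}. (\<Prod>k\<in>S. w k) * (\<Prod>k\<in>{..<n}-S. 1))"
    unfolding zz_def w_def by (simp add: prod.distrib)
  also have "\<dots> = (\<Prod>k<n. w k + 1)" by (rule prod_add[symmetric]) simp
  also have "\<dots> = (if t = r then 2^n else 0)"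
  proof (cases "t = r")
    case True
    then have "w k + 1 = 2" for k unfolding w_def by auto
    then show ?thesis using True by simp
  next
    case False
    then obtain k where k: "k < n" "bit t k \<noteq> bit r k" using bits_neq t r by blast
    then have "w k + 1 = 0" unfolding w_def by auto
    then show ?thesis using False k by (auto simp: prod_zero_iff)
  qed
  finally show ?thesis .
qed

lemma fourier:
  assumes r: "r < 2^n"
  shows "\<phi> r = (\<Sum>S\<in>Pow {..<n}. (1/2^n * (\<Sum>t<2^n. \<phi> t * zz S t)) * zz S r)"
proof -
  have "(\<Sum>S\<in>Pow {..<n}. (1/2^n * (\<Sum>t<2^n. \<phi> t * zz S t)) * zz S r)
     = 1/2^n * (\<Sum>t<2^n. \<phi> t * (\<Sum>S\<in>Pow {..<n}. zz S t * zz S r))"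
  proof -
    have "(\<Sum>S\<in>Pow {..<n}. (1/2^n * (\<Sum>t<2^n. \<phi> t * zz S t)) * zz S r)
       = (\<Sum>S\<in>Pow {..<n}. \<Sum>t<2^n. 1/2^n * (\<phi> t * (zz S t * zz S r)))"
      by (intro sum.cong refl) (simp add: sum_distrib_left sum_distrib_right mult.assoc)
    also have "\<dots> = (\<Sum>t<2^n. \<Sum>S\<in>Pow {..<n}. 1/2^n * (\<phi> t * (zz S t * zz S r)))"
      by (rule sum.swap)
    also have "\<dots> = (\<Sum>t<2^n. 1/2^n * (\<phi> t * (\<Sum>S\<in>Pow {..<n}. zz S t * zz S r)))"
      by (intro sum.cong refl) (simp only: sum_distrib_left)
    also have "\<dots> = 1/2^n * (\<Sum>t<2^n. \<phi> t * (\<Sum>S\<in>Pow {..<n}. zz S t * zz S r))"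
      by (simp only: sum_distrib_left)
    finally show ?thesis .
  qed
  also have "\<dots> = 1/2^n * (\<Sum>t<2^n. if t = r then \<phi> t * 2^n else 0)"
    using r by (intro arg_cong[where f="\<lambda>x. 1/2^n * x"] sum.cong refl) (simp add: char_sum)
  also have "\<dots> = \<phi> r" using r by (simp add: sum.delta)
  finally show ?thesis by simp
qed

definition Tset :: "nat \<Rightarrow> complex mat set" where
  "Tset n = {g \<in> carrier_mat (2^n) (2^n). \<forall>r<2^n. \<forall>c<2^n. g $$ (r,c) \<in> \<real> \<and> g $$ (c,r) = - g $$ (r,c)
      \<and> (zz {..<n} r \<noteq> zz {..<n} c \<longrightarrow> g $$ (r,c) = 0)}"

lemma TsetD:
  assumes "g \<in> Tset n" "r < 2^n" "c < 2^n"
  shows "g $$ (r,c) \<in> \<real>" "g $$ (c,r) = - g $$ (r,c)" "zz {..<n} r \<noteq> zz {..<n} c \<Longrightarrow> g $$ (r,c) = 0"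
  using assms unfolding Tset_def by blast+

lemma entry_sum_closure:
  assumes "finite I" "\<And>i. i \<in> I \<Longrightarrow> X i \<in> lie_closure N G" "\<And>i. i \<in> I \<Longrightarrow> X i \<in> carrier_mat N N"
  shows "mat N N (\<lambda>rc. \<Sum>i\<in>I. X i $$ rc) \<in> lie_closure N G"
  using assms
proof (induction I rule: finite_induct)
  case empty
  have "mat N N (\<lambda>rc. \<Sum>i\<in>{}. X i $$ rc) = 0\<^sub>m N N" by (rule eq_matI) auto
  then show ?case using lie_closure.zero by simp
next
  case (insert a I)
  have "mat N N (\<lambda>rc. \<Sum>i\<in>insert a I. X i $$ rc) = X a + mat N N (\<lambda>rc. \<Sum>i\<in>I. X i $$ rc)"
    using insert by (intro eq_matI) auto
  then show ?case using insert lie_closure.add by auto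
qed

lemma flip_empty[simp]: "flip {} r = r" by (simp add: flip_def msk_def)

lemma D_lemma:
  assumes r: "r < 2^n" and c: "c < 2^n"
  shows "(\<Sum>M\<in>Pow {..<n}. Bm (2^n) (\<phi> M) M $$ (r,c)) = \<phi> {k. k < n \<and> bit r k \<noteq> bit c k} r"
proof -
  define D where "D = {k. k < n \<and> bit r k \<noteq> bit c k}"
  have "(\<Sum>M\<in>Pow {..<n}. Bm (2^n) (\<phi> M) M $$ (r,c)) = (\<Sum>M\<in>Pow {..<n}. if M = D then \<phi> M r else 0)"
  proof (intro sum.cong refl)
    fix M assume "M \<in> Pow {..<n}"
    then have M: "M \<subseteq> {..<n}" by auto
    have "r = flip M c \<longleftrightarrow> M = D"
      unfolding flip_eq_iff[OF M r c] D_def using M by auto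
    then show "Bm (2^n) (\<phi> M) M $$ (r,c) = (if M = D then \<phi> M r else 0)"
      using r c by (simp add: Bm_index)
  qed
  also have "\<dots> = \<phi> D r"
  proof -
    have "D \<in> Pow {..<n}" unfolding D_def by auto
    then show ?thesis by simp
  qed
  finally show ?thesis unfolding D_def .
qed

fun xf :: "pauli \<Rightarrow> bool" where
  "xf PI = False" | "xf PX = True" | "xf PY = True" | "xf PZ = False"

fun ph :: "pauli \<Rightarrow> nat \<Rightarrow> complex" where
  "ph PI a = 1" | "ph PX a = 1" | "ph PY a = (if a = 0 then - \<i> else \<i>)"
| "ph PZ a = (if a = 0 then 1 else -1)"

lemma pe_alt: "a < 2 \<Longrightarrow> b < 2 \<Longrightarrow> pauli_entry p a b = (if (a \<noteq> b) = xf p then ph p a else 0)"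
  by (cases p) auto

lemma bv: "((r::nat) div 2^k) mod 2 = (if bit r k then 1 else 0)"
  by (simp add: bit_iff_odd odd_iff_mod_2_eq_one)

lemma pauli_string_Bm:
  "pauli_string n P = Bm (2^n) (\<lambda>r. \<Prod>k<n. ph (P (Suc k)) ((r div 2^k) mod 2)) {k. k < n \<and> xf (P (Suc k))}"
proof (rule eq_matI)
  fix r c assume "r < dim_row (Bm (2^n) (\<lambda>r. \<Prod>k<n. ph (P (Suc k)) ((r div 2^k) mod 2)) {k. k < n \<and> xf (P (Suc k))})"
    "c < dim_col (Bm (2^n) (\<lambda>r. \<Prod>k<n. ph (P (Suc k)) ((r div 2^k) mod 2)) {k. k < n \<and> xf (P (Suc k))})"
  then have r: "r < 2^n" and c: "c < 2^n" by auto
  define M where "M = {k. k < n \<and> xf (P (Suc k))}"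
  have M: "M \<subseteq> {..<n}" unfolding M_def by auto
  have "pauli_string n P $$ (r,c) = (\<Prod>k\<in>{Suc 0..n}. pauli_entry (P k) ((r div 2^(k-1)) mod 2) ((c div 2^(k-1)) mod 2))"
    using r c by (simp add: pauli_string_def)
  also have "\<dots> = (\<Prod>k<n. pauli_entry (P (Suc k)) ((r div 2^k) mod 2) ((c div 2^k) mod 2))"
    by (simp add: prod.atLeast1_atMost_eq)
  also have "\<dots> = (\<Prod>k<n. if (bit r k \<noteq> bit c k) = xf (P (Suc k)) then ph (P (Suc k)) ((r div 2^k) mod 2) else 0)"
    by (intro prod.cong refl) (simp add: pe_alt bv)
  also have "\<dots> = (if r = flip M c then (\<Prod>k<n. ph (P (Suc k)) ((r div 2^k) mod 2)) else 0)"
  proof (cases "r = flip M c")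
    case True
    then have "\<forall>k<n. (bit r k \<noteq> bit c k) \<longleftrightarrow> k \<in> M" using flip_eq_iff[OF M r c] by simp
    then have h: "\<forall>k<n. (bit r k \<noteq> bit c k) \<longleftrightarrow> xf (P (Suc k))" unfolding M_def by auto
    have "(\<Prod>k<n. if (bit r k \<noteq> bit c k) = xf (P (Suc k)) then ph (P (Suc k)) ((r div 2^k) mod 2) else 0)
       = (\<Prod>k<n. ph (P (Suc k)) ((r div 2^k) mod 2))"
      by (rule prod.cong) (use h in auto)
    then show ?thesis using True by simp
  next
    case False
    then obtain k where "k < n" "\<not> ((bit r k \<noteq> bit c k) \<longleftrightarrow> k \<in> M)" using flip_eq_iff[OF M r c] by blast
    then show ?thesis using False unfolding M_def by (auto simp: prod_zero_iff)
  qed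
  finally show "pauli_string n P $$ (r,c) = Bm (2^n) (\<lambda>r. \<Prod>k<n. ph (P (Suc k)) ((r div 2^k) mod 2)) {k. k < n \<and> xf (P (Suc k))} $$ (r,c)"
    using r c by (simp add: Bm_index M_def)
qed (auto simp: pauli_string_def)

lemma Z_all_Bm: "Z_all n = Bm (2^n) (zz {..<n}) {}"
proof -
  have "{k. k < n \<and> xf PZ} = {}" by simp
  moreover have "(\<Prod>k<n. ph PZ (r div 2 ^ k mod 2)) = zz {..<n} r" for r
    unfolding zz_def by (rule prod.cong) (auto simp: bv)
  ultimately show ?thesis unfolding Z_all_def pauli_string_Bm by simp
qed

lemma two_site_phase:
  assumes "j < n" "\<And>k. k < n \<Longrightarrow> k \<noteq> j \<Longrightarrow> ph (Q k) ((r div 2^k) mod 2) = 1"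
  shows "(\<Prod>k<n. ph (Q k) ((r div 2^k) mod 2)) = ph (Q j) ((r div 2^j) mod 2)"
proof -
  have "(\<Prod>k<n. ph (Q k) ((r div 2^k) mod 2)) = ph (Q j) ((r div 2^j) mod 2) * (\<Prod>k\<in>{..<n} - {j}. ph (Q k) ((r div 2^k) mod 2))"
    using assms by (subst prod.remove[of _ j]) auto
  also have "(\<Prod>k\<in>{..<n} - {j}. ph (Q k) ((r div 2^k) mod 2)) = 1"
    using assms by (intro prod.neutral) auto
  finally show ?thesis by simp
qed

lemma gen_XY:
  assumes "i \<in> {1..n}" "j \<in> {1..n}" "i \<noteq> j"
  shows "\<i> \<cdot>\<^sub>m two_site n PX i PY j = Bm (2^n) (zz {j-1}) {i-1, j-1}"
proof -
  define Q where "Q k = (if Suc k = i then PX else if Suc k = j then PY else PI)" for k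
  have M: "{k. k < n \<and> xf ((\<lambda>k. if k = i then PX else if k = j then PY else PI) (Suc k))} = {i-1, j-1}"
    using assms by auto
  have "\<i> \<cdot>\<^sub>m two_site n PX i PY j = Bm (2^n) (\<lambda>r. \<i> * (\<Prod>k<n. ph (Q k) ((r div 2^k) mod 2))) {i-1, j-1}"
    unfolding two_site_def pauli_string_Bm Bm_smult M Q_def by simp
  also have "\<dots> = Bm (2^n) (zz {j-1}) {i-1, j-1}"
  proof (intro Bm_cong)
    fix r :: nat
    have "(\<Prod>k<n. ph (Q k) ((r div 2^k) mod 2)) = ph (Q (j-1)) ((r div 2^(j-1)) mod 2)"
      by (rule two_site_phase) (use assms in \<open>auto simp: Q_def\<close>)
    also have "\<dots> = ph PY ((r div 2^(j-1)) mod 2)" using assms by (simp add: Q_def)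
    finally show "\<i> * (\<Prod>k<n. ph (Q k) ((r div 2^k) mod 2)) = zz {j-1} r"
      by (simp add: zz_def bv)
  qed
  finally show ?thesis .
qed

lemma gen_YX:
  assumes "i \<in> {1..n}" "j \<in> {1..n}" "i \<noteq> j"
  shows "\<i> \<cdot>\<^sub>m two_site n PY i PX j = Bm (2^n) (zz {i-1}) {i-1, j-1}"
proof -
  define Q where "Q k = (if Suc k = i then PY else if Suc k = j then PX else PI)" for k
  have M: "{k. k < n \<and> xf ((\<lambda>k. if k = i then PY else if k = j then PX else PI) (Suc k))} = {i-1, j-1}"
    using assms by auto
  have "\<i> \<cdot>\<^sub>m two_site n PY i PX j = Bm (2^n) (\<lambda>r. \<i> * (\<Prod>k<n. ph (Q k) ((r div 2^k) mod 2))) {i-1, j-1}"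
    unfolding two_site_def pauli_string_Bm Bm_smult M Q_def by simp
  also have "\<dots> = Bm (2^n) (zz {i-1}) {i-1, j-1}"
  proof (intro Bm_cong)
    fix r :: nat
    have "(\<Prod>k<n. ph (Q k) ((r div 2^k) mod 2)) = ph (Q (i-1)) ((r div 2^(i-1)) mod 2)"
      by (rule two_site_phase) (use assms in \<open>auto simp: Q_def\<close>)
    also have "\<dots> = ph PY ((r div 2^(i-1)) mod 2)" using assms by (simp add: Q_def)
    finally show "\<i> * (\<Prod>k<n. ph (Q k) ((r div 2^k) mod 2)) = zz {i-1} r"
      by (simp add: zz_def bv)
  qed
  finally show ?thesis .
qed

locale gen =
  fixes n :: nat and G :: "complex mat set"
  assumes G0: "\<And>i j. i < n \<Longrightarrow> j < n \<Longrightarrow> i \<noteq> j \<Longrightarrow> Bm (2^n) (zz {j}) {i,j} \<in> lie_closure (2^n) G"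
begin

definition good where "good S M \<longleftrightarrow> Bm (2^n) (zz S) M \<in> lie_closure (2^n) G"

lemma move:
  assumes "S \<subseteq> {..<n}" "i < n" "j < n" "c < n" "good S {i,c}" "c \<in> S" "i \<notin> S" "j \<notin> S" "j \<noteq> i" "j \<noteq> c"
  shows "good (insert j S) {i,j}"
proof -
  have ic: "i \<noteq> c" using assms by auto
  have "good (sd S {j}) (sd {i,c} {c,j})"
    unfolding good_def
  proof (rule comm_step[of S n "{j}" "{i,c}" "{c,j}"])
    show "Bm (2 ^ n) (zz {j}) {c, j} \<in> lie_closure (2 ^ n) G" using G0 assms by auto
    have "{j} \<inter> {i,c} = {}" using assms by auto
    moreover have "S \<inter> {c,j} = {c}" using assms by auto
    ultimately show "eps ({j} \<inter> {i, c}) \<noteq> eps (S \<inter> {c, j})" by (simp add: eps_def)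
  qed (use assms in \<open>auto simp: good_def\<close>)
  moreover have "sd S {j} = insert j S" "sd {i,c} {c,j} = {i,j}" using assms ic by (auto simp: sd_def)
  ultimately show ?thesis by simp
qed

lemma L1:
  assumes "finite R" "R \<subseteq> {..<n}"
  shows "\<forall>i j. i < n \<longrightarrow> j < n \<longrightarrow> i \<noteq> j \<longrightarrow> i \<notin> R \<longrightarrow> j \<notin> R \<longrightarrow> good (insert j R) {i,j}"
  using assms
proof (induction R rule: finite_induct)
  case empty
  then show ?case using G0 by (auto simp: good_def)
next
  case (insert c R)
  show ?case
  proof (intro allI impI)
    fix i j assume h: "i < n" "j < n" "i \<noteq> j" "i \<notin> insert c R" "j \<notin> insert c R"
    have c: "c < n" using insert by auto
    have "good (insert c R) {i,c}" using insert.IH insert.prems insert.hyps h c by auto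
    then show "good (insert j (insert c R)) {i,j}"
      using move[of "insert c R" i j c] insert h c by auto
  qed
qed

lemma P1:
  assumes "i < n" "j < n" "i \<noteq> j" "S \<subseteq> {..<n}" "odd (card (S \<inter> {i,j}))"
  shows "good S {i,j}"
proof (cases "j \<in> S")
  case True
  then have "i \<notin> S" using assms by (auto simp: Int_absorb1)
  have fS: "finite S" using assms(4) finite_subset by blast
  have L: "\<forall>i j'. i < n \<longrightarrow> j' < n \<longrightarrow> i \<noteq> j' \<longrightarrow> i \<notin> S - {j} \<longrightarrow> j' \<notin> S - {j} \<longrightarrow> good (insert j' (S - {j})) {i,j'}"
    using fS assms(4) by (intro L1) auto
  have "good (insert j (S - {j})) {i,j}" using L assms \<open>i \<notin> S\<close> by blast
  then show ?thesis using True by (simp add: insert_absorb)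
next
  case False
  then have "i \<in> S" using assms by (cases "i \<in> S") auto
  have fS: "finite S" using assms(4) finite_subset by blast
  have L: "\<forall>i' j'. i' < n \<longrightarrow> j' < n \<longrightarrow> i' \<noteq> j' \<longrightarrow> i' \<notin> S - {i} \<longrightarrow> j' \<notin> S - {i} \<longrightarrow> good (insert j' (S - {i})) {i',j'}"
    using fS assms(4) by (intro L1) auto
  have "good (insert i (S - {i})) {j,i}" using L assms False by blast
  then show ?thesis using \<open>i \<in> S\<close> by (simp add: insert_absorb insert_commute)
qed

lemma card_split:
  assumes "finite S" "a \<in> M" "b \<in> M" "a \<noteq> b"
  shows "card (S \<inter> M) = card (S \<inter> (M - {a,b})) + card (S \<inter> {a,b})"
proof -
  have "S \<inter> M = (S \<inter> (M - {a,b})) \<union> (S \<inter> {a,b})" using assms by auto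
  then show ?thesis using assms by (metis card_Un_disjoint finite_Int Diff_disjoint Int_Diff inf_sup_aci(1) Int_Un_distrib Diff_Int_distrib2 inf.idem)
qed

lemma gen_all:
  "M \<subseteq> {..<n} \<Longrightarrow> even (card M) \<Longrightarrow> M \<noteq> {} \<Longrightarrow> S \<subseteq> {..<n} \<Longrightarrow> odd (card (S \<inter> M)) \<Longrightarrow> good S M"
proof (induction "card M" arbitrary: M S rule: less_induct)
  case less
  have fM: "finite M" using less.prems finite_subset by blast
  have fS: "finite S" using less.prems finite_subset by blast
  have "card M \<noteq> 0" using fM less.prems by simp
  show ?case
  proof (cases "card M = 2")
    case True
    then obtain i j where M: "M = {i,j}" "i \<noteq> j" by (meson card_2_iff)
    then show ?thesis using less.prems P1 by auto
  next
    case False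
    then have c4: "card M \<ge> 4" using \<open>card M \<noteq> 0\<close> less.prems(2)
      by presburger
    then obtain a where a: "a \<in> M" using fM by fastforce
    have "card (M - {a}) \<ge> 3" using c4 a fM by simp
    then have "M - {a} \<noteq> {}" by (metis card.empty not_numeral_le_zero)
    then obtain b where b: "b \<in> M - {a}" by blast
    then have b': "b \<in> M" "a \<noteq> b" by auto
    define M0 where "M0 = M - {a,b}"
    have cM0: "card M0 = card M - 2" unfolding M0_def using a b' fM by (simp add: card_Diff_subset)
    have M0n: "M0 \<subseteq> {..<n}" "M0 \<noteq> {}" "even (card M0)" "card M0 < card M"
    proof -
      show "M0 \<subseteq> {..<n}" using less.prems unfolding M0_def by auto
      show "M0 \<noteq> {}" using cM0 c4 by (metis card.empty diff_is_0_eq numeral_le_iff semiring_norm(69) order.trans le_diff_conv2 numeral_Bit0 add_leD1 not_numeral_le_zero)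
      show "even (card M0)" using cM0 c4 less.prems(2) by simp
      show "card M0 < card M" using cM0 c4 by simp
    qed
    have ab: "{a,b} \<subseteq> {..<n}" using a b' less.prems by auto
    have split: "card (S \<inter> M) = card (S \<inter> M0) + card (S \<inter> {a,b})"
      unfolding M0_def using card_split[OF fS a b'(1) b'(2)] .
    have Mre: "sd M0 {a,b} = M" unfolding M0_def sd_def using a b' by auto
    show ?thesis
    proof (cases "even (card (S \<inter> {a,b}))")
      case True
      define S0 where "S0 = sd S {b}"
      have S0n: "S0 \<subseteq> {..<n}" unfolding S0_def sd_def using less.prems ab by auto
      have "S0 \<inter> M0 = S \<inter> M0" unfolding S0_def sd_def M0_def by auto
      then have oS0: "odd (card (S0 \<inter> M0))" using split True less.prems(5) by simp
      have g1: "good S0 M0" using less.hyps[OF M0n(4) M0n(1,3,2) S0n oS0] .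
      have g2: "good {b} {a,b}" using G0 ab b' unfolding good_def by auto
      have e1: "eps ({b} \<inter> M0) = 1" unfolding M0_def eps_def by auto
      have "S0 \<inter> {a,b} = sd (S \<inter> {a,b}) {b}" unfolding S0_def sd_def by auto
      then have "odd (card (S0 \<inter> {a,b}))" using odd_sd1[of "S \<inter> {a,b}" b] True by simp
      then have e2: "eps (S0 \<inter> {a,b}) = -1" by (simp add: eps_if)
      have "good (sd S0 {b}) (sd M0 {a,b})" unfolding good_def
        by (rule comm_step[OF S0n _ M0n(1) ab]) (use g1 g2 e1 e2 ab in \<open>auto simp: good_def\<close>)
      moreover have "sd S0 {b} = S" unfolding S0_def sd_def by auto
      ultimately show ?thesis using Mre by simp
    next
      case False
      then obtain c where c: "c \<in> M0" using M0n(2) by blast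
      have c': "c \<noteq> a" "c \<noteq> b" "c < n" using c M0n(1) unfolding M0_def by auto
      define T where "T = {b,c}"
      define S0 where "S0 = sd S T"
      have Tn: "T \<subseteq> {..<n}" unfolding T_def using ab c' by auto
      have S0n: "S0 \<subseteq> {..<n}" unfolding S0_def sd_def using less.prems Tn by auto
      have "S0 \<inter> M0 = sd (S \<inter> M0) {c}" using c c' unfolding S0_def T_def sd_def M0_def by auto
      moreover have "even (card (S \<inter> M0))" using split False less.prems(5) by simp
      ultimately have oS0: "odd (card (S0 \<inter> M0))" using odd_sd1[of "S \<inter> M0" c] fS by simp
      have g1: "good S0 M0" using less.hyps[OF M0n(4) M0n(1,3,2) S0n oS0] .
      have "T \<inter> {a,b} = {b}" unfolding T_def using c' b' by auto
      then have g2: "good T {a,b}" using P1[of a b T] ab b' Tn by auto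
      have "T \<inter> M0 = {c}" using c c' b' unfolding T_def M0_def by auto
      then have e1: "eps (T \<inter> M0) = -1" unfolding eps_def by auto
      have "S0 \<inter> {a,b} = sd (S \<inter> {a,b}) {b}" unfolding S0_def T_def sd_def using c' by auto
      then have "even (card (S0 \<inter> {a,b}))" using odd_sd1[of "S \<inter> {a,b}" b] False fS by simp
      then have e2: "eps (S0 \<inter> {a,b}) = 1" by (simp add: eps_if)
      have "good (sd S0 T) (sd M0 {a,b})" unfolding good_def
        by (rule comm_step[OF S0n Tn M0n(1) ab]) (use g1 g2 e1 e2 ab in \<open>auto simp: good_def\<close>)
      moreover have "sd S0 T = S" unfolding S0_def sd_def by auto
      ultimately show ?thesis using Mre by simp
    qed
  qed
qed

lemma span_odd_part:
  assumes M: "M \<subseteq> {..<n}" "even (card M)" "M \<noteq> {}"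
    and real: "\<And>r. r < 2^n \<Longrightarrow> \<phi> r \<in> \<real>"
    and odd: "\<And>r. r < 2^n \<Longrightarrow> \<phi> (flip M r) = - \<phi> r"
  shows "Bm (2^n) \<phi> M \<in> lie_closure (2^n) G"
proof -
  have fM: "finite M" using M finite_subset by blast
  define cS where "cS S = 1/2^n * (\<Sum>t<2^n. \<phi> t * zz S t)" for S
  define d where "d S = cS S * (1 - eps (S \<inter> M)) / 2" for S
  have rep: "\<phi> r = (\<Sum>S\<in>Pow {..<n}. d S * zz S r)" if r: "r < 2^n" for r
  proof -
    have fr: "flip M r < 2^n" using flip_lt[OF M(1) r] .
    have "\<phi> (flip M r) = (\<Sum>S\<in>Pow {..<n}. cS S * zz S (flip M r))"
      unfolding cS_def by (rule fourier[OF fr])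
    also have "\<dots> = (\<Sum>S\<in>Pow {..<n}. cS S * eps (S \<inter> M) * zz S r)"
      using fM by (intro sum.cong refl) (simp add: zz_flip[OF finite_subset[OF _ finite_lessThan]])
    finally have 1: "\<phi> (flip M r) = (\<Sum>S\<in>Pow {..<n}. cS S * eps (S \<inter> M) * zz S r)" .
    have 2: "\<phi> r = (\<Sum>S\<in>Pow {..<n}. cS S * zz S r)"
      unfolding cS_def by (rule fourier[OF r])
    have "\<phi> r = (\<phi> r - \<phi> (flip M r)) / 2" using odd[OF r] by simp
    also have "\<dots> = ((\<Sum>S\<in>Pow {..<n}. cS S * zz S r) - (\<Sum>S\<in>Pow {..<n}. cS S * eps (S \<inter> M) * zz S r)) / 2"
      using 1 2 by simp
    also have "\<dots> = (\<Sum>S\<in>Pow {..<n}. d S * zz S r)"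
      unfolding d_def by (simp add: sum_subtractf[symmetric] sum_divide_distrib algebra_simps)
    finally show ?thesis .
  qed
  have "Bm (2^n) \<phi> M = mat (2^n) (2^n) (\<lambda>rc. \<Sum>S\<in>Pow {..<n}. Bm (2^n) (\<lambda>r. d S * zz S r) M $$ rc)"
  proof (rule eq_matI)
    fix r c assume "r < dim_row (mat (2^n) (2^n) (\<lambda>rc. \<Sum>S\<in>Pow {..<n}. Bm (2^n) (\<lambda>r. d S * zz S r) M $$ rc))"
      "c < dim_col (mat (2^n) (2^n) (\<lambda>rc. \<Sum>S\<in>Pow {..<n}. Bm (2^n) (\<lambda>r. d S * zz S r) M $$ rc))"
    then have r: "r < 2^n" and c: "c < 2^n" by auto
    show "Bm (2^n) \<phi> M $$ (r,c) = mat (2^n) (2^n) (\<lambda>rc. \<Sum>S\<in>Pow {..<n}. Bm (2^n) (\<lambda>r. d S * zz S r) M $$ rc) $$ (r,c)"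
      using r c by (simp add: Bm_index rep)
  qed auto
  also have "\<dots> \<in> lie_closure (2^n) G"
  proof (rule entry_sum_closure)
    fix S assume S: "S \<in> Pow {..<n}"
    show "Bm (2^n) (\<lambda>r. d S * zz S r) M \<in> lie_closure (2^n) G"
    proof (cases "even (card (S \<inter> M))")
      case True
      then have "d S = 0" unfolding d_def eps_if by simp
      then show ?thesis using Bm_zero lie_closure.zero by simp
    next
      case False
      then have dS: "d S = cS S" unfolding d_def eps_if by simp
      have "(\<Sum>t<2^n. \<phi> t * zz S t) \<in> \<real>" using real zz_real by (intro sum_in_Reals Reals_mult) auto
      then have "cS S \<in> \<real>" unfolding cS_def by (intro Reals_mult) auto
      then obtain x where x: "cS S = complex_of_real x" by (auto elim: Reals_cases)
      have "good S M" using gen_all[OF M(1,2,3)] S False by auto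
      then have "complex_of_real x \<cdot>\<^sub>m Bm (2^n) (zz S) M \<in> lie_closure (2^n) G"
        unfolding good_def by (rule lie_closure.smult)
      then show ?thesis using dS x by (simp add: Bm_smult)
    qed
  qed auto
  finally show ?thesis .
qed

lemma span_all:
  assumes g: "g \<in> Tset n"
  shows "g \<in> lie_closure (2^n) G"
proof -
  define \<phi> where "\<phi> M r = g $$ (r, flip M r)" for M r
  have gc: "g \<in> carrier_mat (2^n) (2^n)" using g by (simp add: Tset_def)
  have "g = mat (2^n) (2^n) (\<lambda>rc. \<Sum>M\<in>Pow {..<n}. Bm (2^n) (\<phi> M) M $$ rc)"
  proof (rule eq_matI)
    fix r c assume "r < dim_row (mat (2^n) (2^n) (\<lambda>rc. \<Sum>M\<in>Pow {..<n}. Bm (2^n) (\<phi> M) M $$ rc))"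
      "c < dim_col (mat (2^n) (2^n) (\<lambda>rc. \<Sum>M\<in>Pow {..<n}. Bm (2^n) (\<phi> M) M $$ rc))"
    then have r: "r < 2^n" and c: "c < 2^n" by auto
    define D where "D = {k. k < n \<and> bit r k \<noteq> bit c k}"
    have D: "D \<subseteq> {..<n}" unfolding D_def by auto
    have "r = flip D c" by (subst flip_eq_iff[OF D r c]) (auto simp: D_def)
    moreover have "finite D" using D finite_subset by blast
    ultimately have "c = flip D r" by simp
    then show "g $$ (r,c) = mat (2^n) (2^n) (\<lambda>rc. \<Sum>M\<in>Pow {..<n}. Bm (2^n) (\<phi> M) M $$ rc) $$ (r,c)"
      using r c D_lemma[OF r c, of \<phi>] by (simp add: \<phi>_def D_def)
  qed (use gc in auto)
  also have "\<dots> \<in> lie_closure (2^n) G"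
  proof (rule entry_sum_closure)
    fix M assume "M \<in> Pow {..<n}"
    then have M: "M \<subseteq> {..<n}" by auto
    have fM: "finite M" using M finite_subset by blast
    show "Bm (2^n) (\<phi> M) M \<in> lie_closure (2^n) G"
    proof (cases "even (card M) \<and> M \<noteq> {}")
      case True
      show ?thesis
      proof (rule span_odd_part)
        fix r :: nat assume r: "r < 2^n"
        have fr: "flip M r < 2^n" using flip_lt[OF M r] .
        show "\<phi> M r \<in> \<real>" unfolding \<phi>_def by (rule TsetD(1)[OF g r fr])
        show "\<phi> M (flip M r) = - \<phi> M r" unfolding \<phi>_def using TsetD(2)[OF g r fr] fM by simp
      qed (use M True in auto)
    next
      case False
      have "\<phi> M r = 0" if r: "r < 2^n" for r
      proof (cases "M = {}")
        case True
        then show ?thesis using TsetD(2)[OF g r r] by (simp add: \<phi>_def)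
      next
        case False
        then have oM: "odd (card M)" using \<open>\<not> (even (card M) \<and> M \<noteq> {})\<close> by auto
        have fr: "flip M r < 2^n" using flip_lt[OF M r] .
        have "zz {..<n} (flip M r) = - zz {..<n} r"
          using zz_flip[of "{..<n}" M r] fM oM M by (simp add: eps_if Int_absorb1)
        then have "zz {..<n} r \<noteq> zz {..<n} (flip M r)" using zz_nz[of "{..<n}" r] by auto
        then show ?thesis unfolding \<phi>_def by (rule TsetD(3)[OF g r fr])
      qed
      then have "Bm (2^n) (\<phi> M) M = Bm (2^n) (\<lambda>r. 0) M" by (intro Bm_cong) auto
      then show ?thesis using Bm_zero lie_closure.zero by simp
    qed
  qed auto
  finally show ?thesis .
qed

end

lemma Bm_in_Tset:
  assumes "S \<subseteq> {..<n}" "M \<subseteq> {..<n}" "odd (card (S \<inter> M))" "even (card M)"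
  shows "Bm (2^n) (zz S) M \<in> Tset n"
proof -
  have f: "finite S" "finite M" using assms finite_subset by blast+
  have eM: "eps M = 1" using assms(4) by (simp add: eps_if)
  have eSM: "eps (S \<inter> M) = -1" using assms(3) by (simp add: eps_if)
  have MI: "{..<n} \<inter> M = M" using assms(2) by auto
  show ?thesis unfolding Tset_def
  proof (intro CollectI conjI allI impI)
    fix r c :: nat assume r: "r < 2^n" and c: "c < 2^n"
    show "Bm (2^n) (zz S) M $$ (r,c) \<in> \<real>" using r c zz_real by (simp add: Bm_index)
    show "Bm (2^n) (zz S) M $$ (c,r) = - Bm (2^n) (zz S) M $$ (r,c)"
    proof (cases "r = flip M c")
      case True
      then have "c = flip M r" using f by simp
      then show ?thesis using r c True f eSM by (simp add: Bm_index zz_flip)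
    next
      case False
      then have "c \<noteq> flip M r" using f by auto
      then show ?thesis using r c False by (simp add: Bm_index)
    qed
    assume ne: "zz {..<n} r \<noteq> zz {..<n} c"
    have "r \<noteq> flip M c"
    proof
      assume "r = flip M c"
      then have "zz {..<n} r = zz {..<n} c" using f zz_flip[of "{..<n}" M c] eM MI by simp
      then show False using ne by simp
    qed
    then show "Bm (2^n) (zz S) M $$ (r,c) = 0" using r c by (simp add: Bm_index)
  qed simp
qed

lemma mult_entry:
  assumes "A \<in> carrier_mat N N" "B \<in> carrier_mat N N" "r < N" "c < N"
  shows "(A * B) $$ (r,c) = (\<Sum>t<N. A $$ (r,t) * B $$ (t,c))"
  using assms by (simp add: scalar_prod_def atLeast0LessThan)

lemma Tset_bracket:
  assumes A: "A \<in> Tset n" and B: "B \<in> Tset n"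
  shows "A * B - B * A \<in> Tset n"
proof -
  have Ac: "A \<in> carrier_mat (2^n) (2^n)" and Bc: "B \<in> carrier_mat (2^n) (2^n)"
    using A B by (auto simp: Tset_def)
  have E: "(A * B - B * A) $$ (r,c) = (\<Sum>t<2^n. A $$ (r,t) * B $$ (t,c)) - (\<Sum>t<2^n. B $$ (r,t) * A $$ (t,c))"
    if "r < 2^n" "c < 2^n" for r c
    using that Ac Bc by (simp add: mult_entry del: index_mult_mat(1))
  show ?thesis unfolding Tset_def
  proof (intro CollectI conjI allI impI)
    show "A * B - B * A \<in> carrier_mat (2^n) (2^n)" using Ac Bc by auto
    fix r c :: nat assume r: "r < 2^n" and c: "c < 2^n"
    show "(A * B - B * A) $$ (r,c) \<in> \<real>" unfolding E[OF r c]
      using TsetD(1)[OF A] TsetD(1)[OF B] r c by (intro Reals_diff sum_in_Reals Reals_mult) auto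
    have "(\<Sum>t<2^n. A $$ (c,t) * B $$ (t,r)) = (\<Sum>t<2^n. B $$ (r,t) * A $$ (t,c))"
    proof (intro sum.cong refl)
      fix t :: nat assume "t \<in> {..<2^n}"
      then have t: "t < 2^n" by simp
      show "A $$ (c,t) * B $$ (t,r) = B $$ (r,t) * A $$ (t,c)"
        unfolding TsetD(2)[OF A t c] TsetD(2)[OF B r t] by simp
    qed
    moreover have "(\<Sum>t<2^n. B $$ (c,t) * A $$ (t,r)) = (\<Sum>t<2^n. A $$ (r,t) * B $$ (t,c))"
    proof (intro sum.cong refl)
      fix t :: nat assume "t \<in> {..<2^n}"
      then have t: "t < 2^n" by simp
      show "B $$ (c,t) * A $$ (t,r) = A $$ (r,t) * B $$ (t,c)"
        unfolding TsetD(2)[OF B t c] TsetD(2)[OF A r t] by simp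
    qed
    ultimately show "(A * B - B * A) $$ (c,r) = - (A * B - B * A) $$ (r,c)"
      unfolding E[OF r c] E[OF c r] by simp
    assume ne: "zz {..<n} r \<noteq> zz {..<n} c"
    have "A $$ (r,t) * B $$ (t,c) = 0" "B $$ (r,t) * A $$ (t,c) = 0" if t: "t < 2^n" for t
    proof -
      show "A $$ (r,t) * B $$ (t,c) = 0"
      proof (cases "zz {..<n} r = zz {..<n} t")
        case True
        then show ?thesis using TsetD(3)[OF B t c] ne by simp
      next
        case False
        then show ?thesis using TsetD(3)[OF A r t] by simp
      qed
      show "B $$ (r,t) * A $$ (t,c) = 0"
      proof (cases "zz {..<n} r = zz {..<n} t")
        case True
        then show ?thesis using TsetD(3)[OF A t c] ne by simp
      next
        case False
        then show ?thesis using TsetD(3)[OF B r t] by simp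
      qed
    qed
    note z = this
    have "(\<Sum>t<2^n. A $$ (r,t) * B $$ (t,c)) = 0" by (rule sum.neutral) (use z in auto)
    moreover have "(\<Sum>t<2^n. B $$ (r,t) * A $$ (t,c)) = 0" by (rule sum.neutral) (use z in auto)
    ultimately show "(A * B - B * A) $$ (r,c) = 0" unfolding E[OF r c] by simp
  qed
qed

lemma Tset_add:
  assumes A: "A \<in> Tset n" and B: "B \<in> Tset n" shows "A + B \<in> Tset n"
proof -
  have Ac: "A \<in> carrier_mat (2^n) (2^n)" and Bc: "B \<in> carrier_mat (2^n) (2^n)"
    using A B by (auto simp: Tset_def)
  show ?thesis unfolding Tset_def
  proof (intro CollectI conjI allI impI)
    show "A + B \<in> carrier_mat (2^n) (2^n)" using Ac Bc by auto
    fix r c :: nat assume r: "r < 2^n" and c: "c < 2^n"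
    have e: "(A + B) $$ (r,c) = A $$ (r,c) + B $$ (r,c)" "(A + B) $$ (c,r) = A $$ (c,r) + B $$ (c,r)"
      using r c Bc by auto
    show "(A + B) $$ (r,c) \<in> \<real>" unfolding e using TsetD(1)[OF A r c] TsetD(1)[OF B r c] by (rule Reals_add)
    show "(A + B) $$ (c,r) = - (A + B) $$ (r,c)" unfolding e using TsetD(2)[OF A r c] TsetD(2)[OF B r c] by simp
    assume "zz {..<n} r \<noteq> zz {..<n} c"
    then show "(A + B) $$ (r,c) = 0" unfolding e using TsetD(3)[OF A r c] TsetD(3)[OF B r c] by simp
  qed
qed

lemma Tset_smult:
  assumes A: "A \<in> Tset n" shows "complex_of_real x \<cdot>\<^sub>m A \<in> Tset n"
proof -
  have Ac: "A \<in> carrier_mat (2^n) (2^n)" using A by (auto simp: Tset_def)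
  show ?thesis unfolding Tset_def
  proof (intro CollectI conjI allI impI)
    show "complex_of_real x \<cdot>\<^sub>m A \<in> carrier_mat (2^n) (2^n)" using Ac by auto
    fix r c :: nat assume r: "r < 2^n" and c: "c < 2^n"
    have e: "(complex_of_real x \<cdot>\<^sub>m A) $$ (r,c) = complex_of_real x * A $$ (r,c)"
      "(complex_of_real x \<cdot>\<^sub>m A) $$ (c,r) = complex_of_real x * A $$ (c,r)"
      using r c Ac by auto
    show "(complex_of_real x \<cdot>\<^sub>m A) $$ (r,c) \<in> \<real>" unfolding e using TsetD(1)[OF A r c] by (intro Reals_mult) auto
    show "(complex_of_real x \<cdot>\<^sub>m A) $$ (c,r) = - (complex_of_real x \<cdot>\<^sub>m A) $$ (r,c)" unfolding e using TsetD(2)[OF A r c] by simp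
    assume "zz {..<n} r \<noteq> zz {..<n} c"
    then show "(complex_of_real x \<cdot>\<^sub>m A) $$ (r,c) = 0" unfolding e using TsetD(3)[OF A r c] by simp
  qed
qed

lemma Tset_zero: "0\<^sub>m (2^n) (2^n) \<in> Tset n"
  unfolding Tset_def by auto

lemma closure_sub_Tset:
  assumes "G \<subseteq> Tset n"
  shows "lie_closure (2^n) G \<subseteq> Tset n"
proof
  fix A assume "A \<in> lie_closure (2^n) G"
  then show "A \<in> Tset n"
    by induction (use assms Tset_add Tset_smult Tset_zero Tset_bracket in auto)
qed

lemma Tset_eq: "Tset n = {g \<in> so_mat (2^n). g * Z_all n = Z_all n * g}"
proof -
  let ?N = "2^n :: nat"
  let ?z = "zz {..<n}"
  have comm: "g * Z_all n = Z_all n * g \<longleftrightarrow> (\<forall>r<?N. \<forall>c<?N. ?z r \<noteq> ?z c \<longrightarrow> g $$ (r,c) = 0)"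
    if gc: "g \<in> carrier_mat ?N ?N" for g
  proof -
    have e1: "(g * Z_all n) $$ (r,c) = g $$ (r,c) * ?z c" if "r < ?N" "c < ?N" for r c
    proof -
      have "(g * Z_all n) $$ (r,c) = (\<Sum>t<?N. g $$ (r,t) * (if t = c then ?z t else 0))"
        using that gc by (simp add: mult_entry Z_all_Bm Bm_index del: index_mult_mat(1))
      also have "\<dots> = g $$ (r,c) * ?z c" using that by (simp add: if_distrib[of "\<lambda>x. g $$ (r,_) * x"] sum.delta' cong: if_cong)
      finally show ?thesis .
    qed
    have e2: "(Z_all n * g) $$ (r,c) = ?z r * g $$ (r,c)" if "r < ?N" "c < ?N" for r c
    proof -
      have "(Z_all n * g) $$ (r,c) = (\<Sum>t<?N. Bm ?N ?z {} $$ (r,t) * g $$ (t,c))"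
        unfolding Z_all_Bm by (rule mult_entry[OF Bm_carrier gc that])
      also have "\<dots> = (\<Sum>t<?N. (if r = t then ?z r else 0) * g $$ (t,c))"
        using that by (intro sum.cong refl) (auto simp: Bm_index)
      also have "\<dots> = (\<Sum>t<?N. if t = r then ?z r * g $$ (r,c) else 0)"
        by (intro sum.cong refl) auto
      also have "\<dots> = ?z r * g $$ (r,c)" using that by simp
      finally show ?thesis .
    qed
    have "g * Z_all n = Z_all n * g \<longleftrightarrow> (\<forall>r<?N. \<forall>c<?N. g $$ (r,c) * ?z c = ?z r * g $$ (r,c))"
      using gc e1 e2 by (auto simp: mat_eq_iff Z_all_Bm)
    also have "\<dots> \<longleftrightarrow> (\<forall>r<?N. \<forall>c<?N. ?z r \<noteq> ?z c \<longrightarrow> g $$ (r,c) = 0)"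
      by (auto simp: algebra_simps) (metis mult.commute mult_cancel_left)
    finally show ?thesis .
  qed
  have so: "g \<in> so_mat ?N \<longleftrightarrow> g \<in> carrier_mat ?N ?N \<and> (\<forall>r<?N. \<forall>c<?N. g $$ (r,c) \<in> \<real> \<and> g $$ (c,r) = - g $$ (r,c))" for g
  proof (cases "g \<in> carrier_mat ?N ?N")
    case True
    have "transpose_mat g = - g \<longleftrightarrow> (\<forall>i<?N. \<forall>j<?N. g $$ (j,i) = - g $$ (i,j))"
      using True by (simp add: mat_eq_iff)
    then show ?thesis unfolding so_mat_def using True by blast
  qed (simp add: so_mat_def)
  show ?thesis
  proof (intro equalityI subsetI)
    fix g assume g: "g \<in> Tset n"
    then have gc: "g \<in> carrier_mat ?N ?N" by (simp add: Tset_def)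
    show "g \<in> {g \<in> so_mat (2^n). g * Z_all n = Z_all n * g}"
    proof -
      have "g \<in> so_mat ?N" unfolding so[of g] using gc TsetD(1,2)[OF g] by blast
      moreover have "g * Z_all n = Z_all n * g" unfolding comm[OF gc] using TsetD(3)[OF g] by blast
      ultimately show ?thesis by simp
    qed
  next
    fix g assume g: "g \<in> {g \<in> so_mat (2^n). g * Z_all n = Z_all n * g}"
    then have gc: "g \<in> carrier_mat ?N ?N" by (simp add: so_mat_def)
    have s1: "g \<in> so_mat ?N" and s2: "g * Z_all n = Z_all n * g" using g by auto
    show "g \<in> Tset n" using s1 s2 unfolding Tset_def so[of g] comm[OF gc] by blast
  qed
qed

theorem mainTheorem19:
  fixes n :: nat
  assumes "n \<ge> 2"
  shows "a2pi n = {g \<in> so_mat (2^n). g * Z_all n = Z_all n * g}"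
proof -
  define Sg where "Sg = {two_site n PX i PY j | i j. i \<in> {1..n} \<and> j \<in> {1..n} \<and> i \<noteq> j}
    \<union> {two_site n PY i PX j | i j. i \<in> {1..n} \<and> j \<in> {1..n} \<and> i \<noteq> j}"
  define G where "G = (\<lambda>P. \<i> \<cdot>\<^sub>m P) ` Sg"
  have a: "a2pi n = lie_closure (2^n) G" unfolding a2pi_def Lie_gen_def G_def Sg_def by simp
  have GT: "G \<subseteq> Tset n"
  proof
    fix A assume "A \<in> G"
    then obtain i j where ij: "i \<in> {1..n}" "j \<in> {1..n}" "i \<noteq> j"
      and A: "A = \<i> \<cdot>\<^sub>m two_site n PX i PY j \<or> A = \<i> \<cdot>\<^sub>m two_site n PY i PX j"
      unfolding G_def Sg_def by blast
    have sub: "{i-1, j-1} \<subseteq> {..<n}" "{j-1} \<subseteq> {..<n}" "{i-1} \<subseteq> {..<n}" using ij by auto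
    have ne: "i - 1 \<noteq> j - 1" using ij by auto
    have c2: "even (card {i-1, j-1})" using ne by simp
    have o1: "odd (card ({j-1} \<inter> {i-1, j-1}))" "odd (card ({i-1} \<inter> {i-1, j-1}))" by auto
    show "A \<in> Tset n"
      using A gen_XY[OF ij] gen_YX[OF ij] Bm_in_Tset[OF sub(2) sub(1) o1(1) c2] Bm_in_Tset[OF sub(3) sub(1) o1(2) c2]
      by auto
  qed
  interpret gen n G
  proof
    fix i j assume ij: "i < n" "j < n" "i \<noteq> j"
    have "\<i> \<cdot>\<^sub>m two_site n PX (i+1) PY (j+1) \<in> G" unfolding G_def Sg_def using ij by force
    moreover have "\<i> \<cdot>\<^sub>m two_site n PX (i+1) PY (j+1) = Bm (2^n) (zz {j}) {i,j}"
      using gen_XY[of "i+1" n "j+1"] ij by simp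
    ultimately show "Bm (2^n) (zz {j}) {i,j} \<in> lie_closure (2^n) G" by (auto intro: lie_closure.gen)
  qed
  have "lie_closure (2^n) G = Tset n"
    using closure_sub_Tset[OF GT] span_all by blast
  then show ?thesis using a Tset_eq by simp
qed

end
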